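(* For every natural number $d>1$ and every $\varepsilon>0$ there are $L,D>0$ such that the following holds. Let $G=(V_1,V_2,E)$ be a bipartite graph and let $u_1,\ldots,u_L\in V_1$ be such that $S_i:=N(u_i)\setminus\bigcup_{j<i}N(u_j)$ satisfies $|S_i|\ge D$ for all $i\in[L]$. If $W\subset V_2$ is chosen uniformly at random among all subsets of $V_2$, then with probability at least $1-\varepsilon$ the following holds: for every pair $(k,m)$ of integers with $0\le k\le m$ and $2\le m\le d$ there is $i\in[L]$ with $d^W(u_i)\equiv k\pmod m$.
   Context: A bipartite graph $G=(V_1,V_2,E)$ has vertex set $V_1\sqcup V_2$ and edge set $E\subset V_1\times V_2$; $N(v)$ is the neighbourhood of $v$ and $d^W(v)=|N(v)\cap W|$. *)

theory Defs
  imports "HOL-Probability.Probability"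
begin

definition nbhd :: "(nat \<times> nat) set \<Rightarrow> nat set \<Rightarrow> nat \<Rightarrow> nat set" where
  "nbhd E V2 u = {v \<in> V2. (u, v) \<in> E}"

definition degW :: "(nat \<times> nat) set \<Rightarrow> nat set \<Rightarrow> nat set \<Rightarrow> nat \<Rightarrow> nat" where
  "degW E V2 W u = card (nbhd E V2 u \<inter> W)"

definition bipartite_graph :: "nat set \<Rightarrow> nat set \<Rightarrow> (nat \<times> nat) set \<Rightarrow> bool" where
  "bipartite_graph V1 V2 E \<longleftrightarrow> finite V1 \<and> finite V2 \<and> V1 \<inter> V2 = {} \<and> E \<subseteq> V1 \<times> V2"

end

theory Submission imports Defs begin
lemma card_split:
  assumes "finite V" "T \<subseteq> V"
  shows "card {W\<in>Pow V. P W} = (\<Sum>W'\<in>Pow (V-T). card {X\<in>Pow T. P (W' \<union> X)})"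
proof -
  let ?S = "(SIGMA W':Pow(V-T). {X\<in>Pow T. P(W'\<union>X)})"
  have eq: "{W\<in>Pow V. P W} = (\<lambda>(A,B). A \<union> B) ` ?S"
  proof (rule set_eqI, rule iffI)
    fix W assume W: "W \<in> {W\<in>Pow V. P W}"
    have e: "W = (W - T) \<union> (W \<inter> T)" by blast
    have "(W - T, W \<inter> T) \<in> ?S" using W e assms(2) by auto
    then show "W \<in> (\<lambda>(A,B). A \<union> B) ` ?S"
      using e by (metis (no_types, lifting) case_prod_conv image_eqI)
  next
    fix W assume "W \<in> (\<lambda>(A,B). A \<union> B) ` ?S"
    then show "W \<in> {W\<in>Pow V. P W}" using assms by auto
  qed
  have inj: "inj_on (\<lambda>(A,B). A \<union> B) ?S"
  proof (rule inj_onI)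
    fix p q assume p: "p \<in> ?S" and q: "q \<in> ?S" and pq: "(\<lambda>(A,B). A \<union> B) p = (\<lambda>(A,B). A \<union> B) q"
    obtain A B where pe: "p = (A,B)" by fastforce
    obtain A' B' where qe: "q = (A',B')" by fastforce
    have h: "A \<inter> T = {}" "B \<subseteq> T" "A' \<inter> T = {}" "B' \<subseteq> T" "A \<union> B = A' \<union> B'"
      using p q pq unfolding pe qe by auto
    have "A = (A \<union> B) - T" "A' = (A' \<union> B') - T" "B = (A \<union> B) \<inter> T" "B' = (A' \<union> B') \<inter> T"
      using h(1-4) by blast+
    then show "p = q" using h(5) pe qe by metis
  qed
  have fin: "finite (Pow (V - T))" using assms by simp
  have "\<forall>W'\<in>Pow (V-T). finite {X\<in>Pow T. P(W'\<union>X)}" proof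
    fix W' show "finite {X\<in>Pow T. P(W'\<union>X)}"
      by (rule finite_subset[of _ "Pow T"]) (use assms finite_subset in auto)
  qed
  then show ?thesis unfolding eq card_image[OF inj]
    using card_SigmaI[OF fin] by simp
qed
lemma count_bad:
  assumes fin: "finite V2" and md: "m \<le> d" "2 \<le> m" and r: "r < m"
  and S: "\<forall>i\<in>{1..L}. card (nbhd E V2 (u i) - (\<Union>j\<in>{1..<i}. nbhd E V2 (u j))) \<ge> d"
  shows "n \<le> L \<Longrightarrow> real (card {W\<in>Pow V2. \<forall>i\<in>{1..n}. degW E V2 W (u i) mod m \<noteq> r})
          \<le> (1 - 1/2^d)^n * 2^card V2"
proof (induction n)
  case 0
  have "{W\<in>Pow V2. \<forall>i\<in>{1..0::nat}. degW E V2 W (u i) mod m \<noteq> r} = Pow V2" by auto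
  then show ?case using fin by (simp add: card_Pow)
next
  case (Suc n)
  define N where "N = (\<lambda>i. nbhd E V2 (u i))"
  define Q where "Q = (\<lambda>W. \<forall>i\<in>{1..n}. degW E V2 W (u i) mod m \<noteq> r)"
  define R where "R = (\<lambda>W. degW E V2 W (u (Suc n)) mod m \<noteq> r)"
  define Sn where "Sn = N (Suc n) - (\<Union>j\<in>{1..<Suc n}. N j)"
  have NV: "N i \<subseteq> V2" for i unfolding N_def nbhd_def by auto
  have "card Sn \<ge> d" using S Suc.prems unfolding Sn_def N_def by auto
  moreover have SnV: "Sn \<subseteq> V2" using NV unfolding Sn_def by auto
  ultimately obtain T where T: "T \<subseteq> Sn" "card T = d"
    by (meson obtain_subset_with_card_n)
  have TV: "T \<subseteq> V2" using T SnV by auto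
  have finT: "finite T" using TV fin finite_subset by blast
  have TN: "T \<subseteq> N (Suc n)" using T unfolding Sn_def by auto
  have TNi: "N i \<inter> T = {}" if "i \<in> {1..n}" for i using T that unfolding Sn_def by auto
  have Qeq: "Q (W' \<union> X) = Q W'" if "X \<subseteq> T" for W' X
  proof -
    have "N i \<inter> (W' \<union> X) = N i \<inter> W'" if "i \<in> {1..n}" for i
      using TNi[OF that] \<open>X \<subseteq> T\<close> by auto
    then show ?thesis unfolding Q_def degW_def N_def by simp
  qed
  have Rbound: "card {X\<in>Pow T. R (W' \<union> X)} \<le> 2^d - 1" if W': "W' \<subseteq> V2 - T" for W'
  proof -
    define c where "c = card (N (Suc n) \<inter> W')"
    have deg: "degW E V2 (W' \<union> X) (u (Suc n)) = c + card X" if "X \<subseteq> T" for X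
    proof -
      have "N (Suc n) \<inter> (W' \<union> X) = (N (Suc n) \<inter> W') \<union> X" using that TN by auto
      moreover have "finite (N (Suc n) \<inter> W')" using NV fin finite_subset by blast
      moreover have "finite X" using that finT finite_subset by blast
      moreover have "(N (Suc n) \<inter> W') \<inter> X = {}" using that W' by auto
      ultimately show ?thesis unfolding degW_def c_def by (simp add: N_def card_Un_disjoint)
    qed
    define j where "j = (r + m - c mod m) mod m"
    have jm: "j < m" unfolding j_def using md by simp
    have cj: "(c + j) mod m = r"
    proof -
      have "(c + j) mod m = (c mod m + (r + m - c mod m)) mod m" unfolding j_def
        by (metis mod_add_left_eq mod_add_right_eq)
      also have "c mod m + (r + m - c mod m) = r + m" using md mod_less_divisor[of m c] by arith
      finally show ?thesis using r by simp
    qed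
    obtain X0 where X0: "X0 \<subseteq> T" "card X0 = j"
      using obtain_subset_with_card_n[of j T] jm md T(2) by (metis order.strict_trans2 less_imp_le_nat)
    have "{X\<in>Pow T. R (W' \<union> X)} \<subseteq> Pow T - {X0}"
      using deg X0 cj unfolding R_def by auto
    then have "card {X\<in>Pow T. R (W' \<union> X)} \<le> card (Pow T - {X0})"
      by (intro card_mono) (use finT in auto)
    also have "\<dots> = 2^d - 1" using X0 finT T(2) by (simp add: card_Pow)
    finally show ?thesis .
  qed
  have finP: "finite (Pow (V2 - T))" using fin by simp
  have "card {W\<in>Pow V2. Q W \<and> R W} = (\<Sum>W'\<in>Pow (V2-T). card {X\<in>Pow T. Q (W' \<union> X) \<and> R (W' \<union> X)})"
    by (rule card_split[OF fin TV])
  also have "\<dots> = (\<Sum>W'\<in>Pow (V2-T). if Q W' then card {X\<in>Pow T. R (W' \<union> X)} else 0)"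
  proof (intro sum.cong refl)
    fix W' assume "W' \<in> Pow (V2 - T)"
    have "{X\<in>Pow T. Q (W' \<union> X) \<and> R (W' \<union> X)} = (if Q W' then {X\<in>Pow T. R (W' \<union> X)} else {})"
      using Qeq by auto
    then show "card {X\<in>Pow T. Q (W' \<union> X) \<and> R (W' \<union> X)} = (if Q W' then card {X\<in>Pow T. R (W' \<union> X)} else 0)"
      by simp
  qed
  also have "\<dots> \<le> (\<Sum>W'\<in>Pow (V2-T). if Q W' then 2^d - 1 else 0)"
    using Rbound by (intro sum_mono) simp
  also have "\<dots> = (2^d - 1) * card {W'\<in>Pow (V2-T). Q W'}"
    by (subst sum.inter_filter[OF finP, symmetric]) simp
  finally have A: "card {W\<in>Pow V2. Q W \<and> R W} \<le> (2^d - 1) * card {W'\<in>Pow (V2-T). Q W'}" .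
  have "card {W\<in>Pow V2. Q W} = (\<Sum>W'\<in>Pow (V2-T). card {X\<in>Pow T. Q (W' \<union> X)})"
    by (rule card_split[OF fin TV])
  also have "\<dots> = (\<Sum>W'\<in>Pow (V2-T). if Q W' then 2^d else 0)"
  proof (intro sum.cong refl)
    fix W' assume "W' \<in> Pow (V2 - T)"
    have "{X\<in>Pow T. Q (W' \<union> X)} = (if Q W' then Pow T else {})"
      using Qeq by auto
    then show "card {X\<in>Pow T. Q (W' \<union> X)} = (if Q W' then 2^d else 0)"
      by (simp add: finT T(2) card_Pow)
  qed
  also have "\<dots> = 2^d * card {W'\<in>Pow (V2-T). Q W'}"
    by (subst sum.inter_filter[OF finP, symmetric]) simp
  finally have B: "card {W\<in>Pow V2. Q W} = 2^d * card {W'\<in>Pow (V2-T). Q W'}" .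
  have IH: "real (card {W\<in>Pow V2. Q W}) \<le> (1 - 1/2^d)^n * 2^card V2"
    using Suc unfolding Q_def by simp
  have set_eq: "{W\<in>Pow V2. \<forall>i\<in>{1..Suc n}. degW E V2 W (u i) mod m \<noteq> r} = {W\<in>Pow V2. Q W \<and> R W}"
    unfolding Q_def R_def by (simp add: atLeastAtMostSuc_conv conj_commute)
  have "real (card {W\<in>Pow V2. Q W \<and> R W}) \<le> (2^d - 1) * real (card {W'\<in>Pow (V2-T). Q W'})"
  proof -
    have "real (card {W\<in>Pow V2. Q W \<and> R W}) \<le> real ((2^d - 1) * card {W'\<in>Pow (V2-T). Q W'})"
      using A by (simp only: of_nat_le_iff)
    also have "real ((2^d - 1) * card {W'\<in>Pow (V2-T). Q W'}) = real (2^d - 1) * real (card {W'\<in>Pow (V2-T). Q W'})"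
      by (simp only: of_nat_mult)
    also have "real ((2::nat)^d - 1) = 2^d - 1"
      by (simp add: of_nat_diff)
    finally show ?thesis .
  qed
  also have "\<dots> = (1 - 1/2^d) * real (card {W\<in>Pow V2. Q W})"
    using B by (simp add: field_simps)
  also have "\<dots> \<le> (1 - 1/2^d) * ((1 - 1/2^d)^n * 2^card V2)"
    by (intro mult_left_mono IH) (simp add: field_simps)
  finally show ?case unfolding set_eq by simp
qed


theorem lemma3p5:
  fixes d :: nat and \<epsilon> :: real
  assumes "d > 1" and "\<epsilon> > 0"
  shows "\<exists>L D :: nat. L > 0 \<and> D > 0 \<and>
    (\<forall>V1 V2 E (u :: nat \<Rightarrow> nat).
       bipartite_graph V1 V2 E \<longrightarrow>
       (\<forall>i\<in>{1..L}. u i \<in> V1) \<longrightarrow>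
       (\<forall>i\<in>{1..L}. card (nbhd E V2 (u i) - (\<Union>j\<in>{1..<i}. nbhd E V2 (u j))) \<ge> D) \<longrightarrow>
       measure_pmf.prob (pmf_of_set (Pow V2))
         {W. \<forall>k m. k \<le> m \<and> 2 \<le> m \<and> m \<le> d \<longrightarrow>
               (\<exists>i\<in>{1..L}. degW E V2 W (u i) mod m = k mod m)} \<ge> 1 - \<epsilon>)"
proof -
  define q :: real where "q = 1 - 1/2^d"
  have q0: "0 \<le> q" and q1: "q < 1" unfolding q_def by simp_all
  define C :: real where "C = real ((d+1)^2)"
  have C0: "C > 0" unfolding C_def by simp
  have "(\<lambda>n. q^n) \<longlonglongrightarrow> 0" by (rule LIMSEQ_power_zero) (use q0 q1 in simp)
  moreover have "0 < \<epsilon> / C" using assms C0 by simp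
  ultimately have "eventually (\<lambda>n. q^n < \<epsilon> / C) sequentially" by (rule order_tendstoD)
  then obtain N where N: "\<And>n. n \<ge> N \<Longrightarrow> q^n < \<epsilon> / C" by (auto simp: eventually_sequentially)
  define L where "L = Suc N"
  have qL: "C * q^L \<le> \<epsilon>" using N[of L] C0 unfolding L_def by (simp add: field_simps)
  show ?thesis
  proof (rule exI[of _ L], rule exI[of _ d], intro conjI allI impI)
    show "L > 0" "d > 0" using assms unfolding L_def by auto
    fix V1 V2 E and u :: "nat \<Rightarrow> nat"
    assume bip: "bipartite_graph V1 V2 E"
      and S: "\<forall>i\<in>{1..L}. card (nbhd E V2 (u i) - (\<Union>j\<in>{1..<i}. nbhd E V2 (u j))) \<ge> d"
    have fin: "finite V2" using bip unfolding bipartite_graph_def by simp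
    define Good where "Good = {W. \<forall>k m. k \<le> m \<and> 2 \<le> m \<and> m \<le> d \<longrightarrow>
               (\<exists>i\<in>{1..L}. degW E V2 W (u i) mod m = k mod m)}"
    define P where "P = {(k,m). k \<le> m \<and> 2 \<le> m \<and> m \<le> d}"
    define B where "B = (\<lambda>p. {W\<in>Pow V2. \<forall>i\<in>{1..L}. degW E V2 W (u i) mod snd p \<noteq> fst p mod snd p})"
    have sub: "Pow V2 - Good \<subseteq> (\<Union>p\<in>P. B p)"
      unfolding Good_def P_def B_def by fastforce
    have PS: "P \<subseteq> {0..d} \<times> {0..d}" unfolding P_def by auto
    have finPP: "finite P" using PS finite_subset by blast
    have cardP: "card P \<le> (d+1)^2"
      using card_mono[OF _ PS] by (simp add: power2_eq_square)
    have Bb: "real (card (B p)) \<le> q^L * 2^card V2" if "p \<in> P" for p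
    proof -
      obtain k m where p: "p = (k,m)" by fastforce
      have m: "k \<le> m" "2 \<le> m" "m \<le> d" using that unfolding p P_def by auto
      have "real (card {W\<in>Pow V2. \<forall>i\<in>{1..L}. degW E V2 W (u i) mod m \<noteq> k mod m}) \<le> q^L * 2^card V2"
        unfolding q_def by (rule count_bad[OF fin m(3) m(2) _ S]) (use m in auto)
      then show ?thesis unfolding B_def p by simp
    qed
    have "real (card (Pow V2 - Good)) \<le> real (card (\<Union>p\<in>P. B p))"
    proof -
      have "finite (\<Union>p\<in>P. B p)" using finPP fin unfolding B_def by auto
      then show ?thesis using card_mono[OF _ sub] by simp
    qed
    also have "\<dots> \<le> real (\<Sum>p\<in>P. card (B p))"
      using card_UN_le[OF finPP] by (simp only: of_nat_le_iff)
    also have "\<dots> = (\<Sum>p\<in>P. real (card (B p)))" by simp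
    also have "\<dots> \<le> (\<Sum>p\<in>P. q^L * 2^card V2)" by (rule sum_mono) (rule Bb)
    also have "\<dots> = real (card P) * (q^L * 2^card V2)" by simp
    also have "\<dots> \<le> C * (q^L * 2^card V2)"
      unfolding C_def using cardP q0 by (intro mult_right_mono) (simp_all only: of_nat_le_iff, simp)
    also have "\<dots> \<le> \<epsilon> * 2^card V2" using qL by (simp add: mult.assoc[symmetric])
    finally have bad: "real (card (Pow V2 - Good)) \<le> \<epsilon> * 2^card V2" .
    have "card (Pow V2) \<le> card (Pow V2 \<inter> Good) + card (Pow V2 - Good)"
      using card_Un_le[of "Pow V2 \<inter> Good" "Pow V2 - Good"] by (simp add: Int_Diff_Un)
    then have "real (2^card V2) \<le> real (card (Pow V2 \<inter> Good)) + real (card (Pow V2 - Good))"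
      using fin by (simp only: card_Pow of_nat_add[symmetric] of_nat_le_iff)
    then have cg: "(1 - \<epsilon>) * 2^card V2 \<le> real (card (Pow V2 \<inter> Good))" using bad by (simp add: algebra_simps)
    have "measure_pmf.prob (pmf_of_set (Pow V2)) Good = real (card (Pow V2 \<inter> Good)) / real (card (Pow V2))"
      by (rule measure_pmf_of_set) (use fin in auto)
    also have "\<dots> = real (card (Pow V2 \<inter> Good)) / 2^card V2" using fin by (simp add: card_Pow)
    finally have pe: "measure_pmf.prob (pmf_of_set (Pow V2)) Good = real (card (Pow V2 \<inter> Good)) / 2^card V2" .
    then have "1 - \<epsilon> \<le> measure_pmf.prob (pmf_of_set (Pow V2)) Good"
    proof -
      have "(1 - \<epsilon>) * 2^card V2 / 2^card V2 \<le> real (card (Pow V2 \<inter> Good)) / 2^card V2"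
        by (rule divide_right_mono[OF cg]) simp
      then show ?thesis using pe by simp
    qed
    then show "measure_pmf.prob (pmf_of_set (Pow V2))
         {W. \<forall>k m. k \<le> m \<and> 2 \<le> m \<and> m \<le> d \<longrightarrow>
               (\<exists>i\<in>{1..L}. degW E V2 W (u i) mod m = k mod m)} \<ge> 1 - \<epsilon>"
      unfolding Good_def .
  qed
qed

end
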